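(* Let $n\geq 4$ and $m=\lfloor (n-2)/2\rfloor$. Then \[R_n(z)=(1+z)^m\sum_{q} z^{\mathrm{run}(q)},\] where the sum is over all permutations $q$ of length $n$ that are minimal in their orbit under the action of $G_m$. In particular, $R_n(z)$ is divisible by $(1+z)^m$.
   Context: For a permutation $p=p_1p_2\cdots p_n$ and an index $i\in[2,n-1]$, $p$ changes direction at $i$ if $p_{i-1}<p_i>p_{i+1}$ or $p_{i-1}>p_i<p_{i+1}$; $\mathrm{run}(p)=k$ means $p$ changes direction exactly $k-1$ times (the number of alternating runs). $R_n(z)=\sum_p z^{\mathrm{run}(p)}$, summed over all permutations $p$ of length $n$. For a string $s$ of distinct integers with underlying set $S$, its complement relative to $S$ is obtained by replacing, for each $j$, the $j$th smallest element of $S$ by the $j$th largest element of $S$. For $1\leq i\leq n$, $c_i$ is the map on permutations of length $n$ that leaves $p_1\cdots p_{i-1}$ unchanged and replaces $p_ip_{i+1}\cdots p_n$ by its complement relative to $\{p_i,\dots,p_n\}$. If $n$ is even, $\mathcal C_n=\{c_3,c_5,\dots,c_{n-1}\}$; if $n$ is odd, $\mathcal C_n=\{c_3,c_5,\dots,c_{n-2}\}$; $G_m\cong(\mathbb Z_2)^m$ is the group generated by $\mathcal C_n$ (these are pairwise commuting involutions), acting on permutations of length $n$. A permutation $q$ is minimal in its orbit if it has the smallest number of alternating runs among all permutations in its $G_m$-orbit (there is exactly one such permutation in each orbit). *)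

theory Defs
  imports "HOL-Combinatorics.Multiset_Permutations" "HOL-Computational_Algebra.Polynomial"
begin

text \<open>Positions are 0-based in lists: the paper's
  index i (1-based, 2 <= i <= n-1) corresponds to list position i-1.\<close>

definition changes_dir :: "nat list \<Rightarrow> nat \<Rightarrow> bool" where
  "changes_dir p i \<longleftrightarrow>
     (p ! (i - 1) < p ! i \<and> p ! i > p ! (i + 1)) \<or>
     (p ! (i - 1) > p ! i \<and> p ! i < p ! (i + 1))"

definition run :: "nat list \<Rightarrow> nat" where
  "run p = Suc (card {i. 1 \<le> i \<and> i + 1 < length p \<and> changes_dir p i})"

definition R :: "nat \<Rightarrow> int poly" where
  "R n = (\<Sum>p\<in>permutations_of_set {1..n}. monom 1 (run p))"

text \<open>Complement of a string of distinct integers relative to its underlying set: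
  the j-th smallest element (rank = number of smaller elements) is replaced by
  the j-th largest element of the sorted list.\<close>
definition complement :: "nat list \<Rightarrow> nat list" where
  "complement s = (let ss = sort s in
     map (\<lambda>x. ss ! (length s - 1 - card {y\<in>set s. y < x})) s)"

definition c :: "nat \<Rightarrow> nat list \<Rightarrow> nat list" where
  "c i p = take (i - 1) p @ complement (drop (i - 1) p)"

definition Cidx :: "nat \<Rightarrow> nat set" where
  "Cidx n = {i. odd i \<and> 3 \<le> i \<and> i \<le> (if even n then n - 1 else n - 2)}"

text \<open>Orbit of p under the group generated by C_n (generators are involutions,
  so the orbit is the closure under the generators).\<close>
inductive_set orbit :: "nat \<Rightarrow> nat list \<Rightarrow> nat list set" for n p where
  self: "p \<in> orbit n p"
| step: "q \<in> orbit n p \<Longrightarrow> i \<in> Cidx n \<Longrightarrow> c i q \<in> orbit n p"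

definition minimal_in_orbit :: "nat \<Rightarrow> nat list \<Rightarrow> bool" where
  "minimal_in_orbit n q \<longleftrightarrow> (\<forall>q'\<in>orbit n q. run q \<le> run q')"

end

theory Submission
  imports Defs
begin

definition rk :: "nat set \<Rightarrow> nat \<Rightarrow> nat" where
  "rk S x = card {y\<in>S. y < x}"

definition Phi :: "nat set \<Rightarrow> nat \<Rightarrow> nat" where
  "Phi S x = sorted_list_of_set S ! (card S - 1 - rk S x)"

lemma rk_lt: assumes "finite S" "x \<in> S" shows "rk S x < card S"
proof -
  have "{y\<in>S. y < x} \<subset> S" using assms by auto
  then show ?thesis unfolding rk_def using assms by (simp add: psubset_card_mono)
qed

lemma rk_nth: assumes "finite S" "k < card S"
  shows "rk S (sorted_list_of_set S ! k) = k"
proof -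
  let ?xs = "sorted_list_of_set S"
  have st: "sorted_wrt (<) ?xs" by (rule strict_sorted_list_of_set)
  have len: "length ?xs = card S" by simp
  have "{y\<in>S. y < ?xs ! k} = (\<lambda>j. ?xs ! j) ` {..<k}"
  proof
    show "{y\<in>S. y < ?xs ! k} \<subseteq> (\<lambda>j. ?xs ! j) ` {..<k}"
    proof
      fix y assume y: "y \<in> {y\<in>S. y < ?xs ! k}"
      then have "y \<in> set ?xs" using assms by simp
      then obtain j where j: "j < length ?xs" "y = ?xs ! j" by (metis in_set_conv_nth)
      have "j < k"
      proof (rule ccontr)
        assume "\<not> j < k"
        then have "k = j \<or> k < j" by auto
        then have "?xs ! k \<le> ?xs ! j" using sorted_wrt_nth_less[OF st, of k j] j by auto
        then show False using y j by auto
      qed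
      then show "y \<in> (\<lambda>j. ?xs ! j) ` {..<k}" using j by auto
    qed
  next
    show "(\<lambda>j. ?xs ! j) ` {..<k} \<subseteq> {y\<in>S. y < ?xs ! k}"
    proof
      fix y assume "y \<in> (\<lambda>j. ?xs ! j) ` {..<k}"
      then obtain j where j: "j < k" "y = ?xs ! j" by auto
      have "y \<in> set ?xs" using j assms len by (metis lessThan_iff nth_mem order.strict_trans)
      moreover have "y < ?xs ! k" using sorted_wrt_nth_less[OF st, of j k] j assms len by simp
      ultimately show "y \<in> {y\<in>S. y < ?xs ! k}" using assms by simp
    qed
  qed
  moreover have "inj_on (\<lambda>j. ?xs ! j) {..<k}"
    using assms len by (intro inj_onI) (simp add: nth_eq_iff_index_eq)
  ultimately show ?thesis unfolding rk_def by (simp add: card_image)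
qed

lemma nth_rk: assumes "finite S" "x \<in> S"
  shows "sorted_list_of_set S ! rk S x = x"
proof -
  have "x \<in> set (sorted_list_of_set S)" using assms by simp
  then obtain j where j: "j < length (sorted_list_of_set S)" "x = sorted_list_of_set S ! j"
    by (metis in_set_conv_nth)
  then show ?thesis using rk_nth[OF assms(1), of j] by simp
qed

lemma Phi_in: assumes "finite S" "x \<in> S" shows "Phi S x \<in> S"
proof -
  have "card S - 1 - rk S x < length (sorted_list_of_set S)"
    using rk_lt[OF assms] by simp
  then show ?thesis unfolding Phi_def using assms
    by (metis nth_mem set_sorted_list_of_set)
qed

lemma rk_Phi: assumes "finite S" "x \<in> S" shows "rk S (Phi S x) = card S - 1 - rk S x"
  unfolding Phi_def using rk_lt[OF assms] by (intro rk_nth[OF assms(1)]) simp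

lemma Phi_Phi: assumes "finite S" "x \<in> S" shows "Phi S (Phi S x) = x"
proof -
  have "Phi S (Phi S x) = sorted_list_of_set S ! (card S - 1 - (card S - 1 - rk S x))"
    unfolding Phi_def[of S "Phi S x"] rk_Phi[OF assms] ..
  also have "card S - 1 - (card S - 1 - rk S x) = rk S x" using rk_lt[OF assms] by simp
  finally show ?thesis using nth_rk[OF assms] by simp
qed

lemma rk_mono: assumes "finite S" "x \<in> S" "x < y" shows "rk S x < rk S y"
proof -
  have "{z\<in>S. z < x} \<subset> {z\<in>S. z < y}" using assms by auto
  then show ?thesis unfolding rk_def using assms by (simp add: psubset_card_mono)
qed

lemma Phi_anti: assumes "finite S" "x \<in> S" "y \<in> S" "x < y" shows "Phi S y < Phi S x"
proof -
  have a: "rk S x < rk S y" by (rule rk_mono[OF assms(1,2,4)])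
  have b: "rk S y < card S" by (rule rk_lt[OF assms(1,3)])
  show ?thesis unfolding Phi_def
    using sorted_wrt_nth_less[OF strict_sorted_list_of_set, of "card S - 1 - rk S y" "card S - 1 - rk S x" S]
      a b assms(1) by simp
qed

lemma Phi_anti_iff: assumes "finite S" "x \<in> S" "y \<in> S" shows "Phi S x < Phi S y \<longleftrightarrow> y < x"
  using Phi_anti[OF assms(1,2,3)] Phi_anti[OF assms(1,3,2)] by (metis less_asym linorder_neqE_nat)

lemma Phi_inj: assumes "finite S" shows "inj_on (Phi S) S"
  by (metis Phi_Phi assms inj_on_inverseI)

lemma Phi_image: assumes "finite S" shows "Phi S ` S = S"
proof
  show "Phi S ` S \<subseteq> S" using Phi_in[OF assms] by auto
  show "S \<subseteq> Phi S ` S" using Phi_Phi[OF assms] Phi_in[OF assms] by (metis image_eqI subsetI)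
qed

lemma complement_eq: assumes "distinct s" shows "complement s = map (Phi (set s)) s"
proof -
  have "sort s = sorted_list_of_set (set s)" using assms
    by (simp add: sorted_list_of_set_sort_remdups distinct_remdups_id)
  moreover have "length s = card (set s)" using assms by (simp add: distinct_card)
  ultimately show ?thesis unfolding complement_def Phi_def rk_def Let_def by simp
qed


definition up :: "nat list \<Rightarrow> nat \<Rightarrow> bool" where
  "up p t \<longleftrightarrow> p ! t < p ! (t + 1)"

definition Ch :: "nat \<Rightarrow> (nat \<Rightarrow> bool) \<Rightarrow> nat set" where
  "Ch n u = {t. 1 \<le> t \<and> t + 1 < n \<and> u (t - 1) \<noteq> u t}"

definition cnt :: "bool \<Rightarrow> bool \<Rightarrow> bool \<Rightarrow> nat" where
  "cnt a b e = (if a \<noteq> b then 1 else 0) + (if b \<noteq> e then 1 else 0)"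

lemma run_Ch: assumes "distinct p" shows "run p = Suc (card (Ch (length p) (up p)))"
proof -
  have "{i. 1 \<le> i \<and> i + 1 < length p \<and> changes_dir p i} = Ch (length p) (up p)"
  proof -
    { fix i assume i: "1 \<le> i" "i + 1 < length p"
      have "p ! (i - 1) \<noteq> p ! i" using i assms by (simp add: nth_eq_iff_index_eq)
      moreover have "p ! i \<noteq> p ! (i + 1)" using i assms by (simp add: nth_eq_iff_index_eq)
      moreover have "i - 1 + 1 = i" using i by simp
      ultimately have "changes_dir p i \<longleftrightarrow> up p (i - 1) \<noteq> up p i"
        unfolding changes_dir_def up_def by (metis linorder_neqE_nat order.asym) }
    then show ?thesis unfolding Ch_def by blast
  qed
  then show ?thesis unfolding run_def by simp
qed

lemma finite_Ch: "finite (Ch n u)"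
  by (rule finite_subset[of _ "{..<n}"]) (auto simp: Ch_def)

lemma card_two: assumes "finite X" "a \<noteq> b"
  shows "card X = card (X - {a, b}) + (if a \<in> X then 1 else 0) + (if b \<in> X then 1 else 0)"
proof -
  have "card X = card (X \<inter> {a, b}) + card (X - {a, b})" using card_Int_Diff[OF assms(1)] .
  moreover have "card (X \<inter> {a, b}) = (if a \<in> X then 1 else 0) + (if b \<in> X then 1 else 0)"
  proof -
    have "X \<inter> {a, b} = (if a \<in> X then {a} else {}) \<union> (if b \<in> X then {b} else {})" by auto
    then show ?thesis using assms(2) by (simp add: card_insert_if)
  qed
  ultimately show ?thesis by simp
qed

lemma loc:
  assumes "2 \<le> k" "k + 2 \<le> n" "\<forall>t. t + 1 < k \<longrightarrow> v t = u t"
    "\<forall>t. k \<le> t \<longrightarrow> t + 2 \<le> n \<longrightarrow> v t = (\<not> u t)"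
  shows "card (Ch n v) + cnt (u (k - 2)) (u (k - 1)) (u k)
       = card (Ch n u) + cnt (u (k - 2)) (v (k - 1)) (\<not> u k)"
proof -
  have ne: "k - 1 \<noteq> k" using assms by simp
  have D: "Ch n v - {k - 1, k} = Ch n u - {k - 1, k}"
  proof -
    { fix t assume t: "1 \<le> t" "t + 1 < n" "t \<noteq> k - 1" "t \<noteq> k"
      have "(v (t - 1) \<noteq> v t) = (u (t - 1) \<noteq> u t)"
      proof (cases "t < k - 1")
        case True
        then show ?thesis using assms(3)[rule_format, of "t - 1"] assms(3)[rule_format, of t] t by simp
      next
        case False
        then have "k < t" using t by auto
        then have "v (t - 1) = (\<not> u (t - 1))" "v t = (\<not> u t)"
          using assms(4)[rule_format, of "t - 1"] assms(4)[rule_format, of t] t by simp_all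
        then show ?thesis by auto
      qed }
    then show ?thesis unfolding Ch_def by auto
  qed
  have v1: "v (k - 2) = u (k - 2)" using assms(1) assms(3)[rule_format, of "k - 2"] by simp
  have v2: "v k = (\<not> u k)" using assms(2) assms(4)[rule_format, of k] by simp
  have k1: "k - 1 - 1 = k - 2" "k - 1 + 1 = k" using assms(1) by auto
  have m1: "(k - 1 \<in> Ch n w) = (w (k - 2) \<noteq> w (k - 1))" for w
  proof -
    have "1 \<le> k - 1" "k - 1 + 1 < n" using assms(1,2) by auto
    then show ?thesis unfolding Ch_def using k1 by simp
  qed
  have m2: "(k \<in> Ch n w) = (w (k - 1) \<noteq> w k)" for w
    unfolding Ch_def using assms(1,2) by simp
  show ?thesis
  proof -
    have cv: "card (Ch n v) = card (Ch n v - {k - 1, k}) + (if u (k - 2) \<noteq> v (k - 1) then 1 else 0)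
       + (if v (k - 1) \<noteq> (\<not> u k) then 1 else 0)"
      using card_two[OF finite_Ch[of n v] ne] m1[of v] m2[of v] v1 v2 by simp
    have cu: "card (Ch n u) = card (Ch n u - {k - 1, k}) + (if u (k - 2) \<noteq> u (k - 1) then 1 else 0)
       + (if u (k - 1) \<noteq> u k then 1 else 0)"
      using card_two[OF finite_Ch[of n u] ne] m1[of u] m2[of u] by simp
    show ?thesis unfolding cnt_def cv cu D by simp
  qed
qed


abbreviation PP :: "nat \<Rightarrow> nat list set" where
  "PP n \<equiv> permutations_of_set {1..n}"

lemma PP_facts: assumes "p \<in> PP n" shows "distinct p" "set p = {1..n}" "length p = n"
proof -
  show d: "distinct p" and s: "set p = {1..n}" using assms by (auto simp: permutations_of_set_def)
  show "length p = n" using distinct_card[OF d] s by simp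
qed

lemma nth_in_drop: assumes "distinct p" "t < length p"
  shows "p ! t \<in> set (drop k p) \<longleftrightarrow> k \<le> t"
proof
  assume "k \<le> t"
  then have "drop k p ! (t - k) = p ! t" "t - k < length (drop k p)" using assms by auto
  then show "p ! t \<in> set (drop k p)" by (metis nth_mem)
next
  assume a: "p ! t \<in> set (drop k p)"
  show "k \<le> t"
  proof (rule ccontr)
    assume "\<not> k \<le> t"
    then have "p ! t \<in> set (take k p)" using assms by (metis in_set_conv_nth length_take min_less_iff_conj not_le_imp_less nth_take)
    moreover have "set (take k p) \<inter> set (drop k p) = {}"
      using assms(1) by (metis append_take_drop_id distinct_append)
    ultimately show False using a by auto
  qed
qed

lemma c_len[simp]: "length (c i p) = length p"
  by (simp add: c_def complement_def Let_def)

lemma c_eq: assumes "distinct p"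
  shows "c i p = take (i - 1) p @ map (Phi (set (drop (i - 1) p))) (drop (i - 1) p)"
  unfolding c_def using assms by (simp add: complement_eq)

lemma c_nth: assumes "distinct p" "i - 1 \<le> length p" "t < length p"
  shows "c i p ! t = (if t < i - 1 then p ! t else Phi (set (drop (i - 1) p)) (p ! t))"
  using assms unfolding c_eq[OF assms(1)] by (simp add: nth_append)

lemma c_perm: assumes "p \<in> PP n" shows "c i p \<in> PP n"
proof -
  let ?k = "i - 1" let ?S = "set (drop ?k p)"
  have d: "distinct p" using PP_facts[OF assms] by simp
  have fS: "finite ?S" by simp
  have s1: "set (map (Phi ?S) (drop ?k p)) = ?S" using Phi_image[OF fS] by simp
  have d1: "distinct (map (Phi ?S) (drop ?k p))"
    using Phi_inj[OF fS] d by (simp add: distinct_map)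
  have disj: "set (take ?k p) \<inter> ?S = {}" using d by (metis append_take_drop_id distinct_append)
  have "set (c i p) = set p"
    unfolding c_eq[OF d] using s1 by (metis append_take_drop_id set_append)
  moreover have "distinct (c i p)"
    unfolding c_eq[OF d] using d1 disj s1 d by simp
  ultimately show ?thesis using assms by (simp add: permutations_of_set_def)
qed

lemma c_c: assumes "distinct p" shows "c i (c i p) = p"
proof (cases "i - 1 \<le> length p")
  case True
  let ?k = "i - 1" let ?S = "set (drop ?k p)"
  have fS: "finite ?S" by simp
  have d1: "distinct (map (Phi ?S) (drop ?k p))"
    using Phi_inj[OF fS] assms by (simp add: distinct_map)
  have s1: "set (map (Phi ?S) (drop ?k p)) = ?S" using Phi_image[OF fS] by simp
  have "complement (map (Phi ?S) (drop ?k p)) = drop ?k p"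
    unfolding complement_eq[OF d1] s1 using Phi_Phi[OF fS] by (simp add: map_idI)
  moreover have "complement (drop ?k p) = map (Phi ?S) (drop ?k p)"
    using assms by (simp add: complement_eq)
  ultimately show ?thesis unfolding c_def using True by simp
next
  case False
  then show ?thesis by (simp add: c_def complement_def)
qed

lemma up_c: assumes "p \<in> PP n" "i - 1 \<le> n" "t + 1 < n"
  shows "t + 1 < i - 1 \<Longrightarrow> up (c i p) t = up p t"
    and "i - 1 \<le> t \<Longrightarrow> up (c i p) t = (\<not> up p t)"
proof -
  have d: "distinct p" and l: "length p = n" using PP_facts[OF assms(1)] by auto
  show "t + 1 < i - 1 \<Longrightarrow> up (c i p) t = up p t"
    unfolding up_def using c_nth[OF d] assms l by simp
  assume a: "i - 1 \<le> t"
  let ?S = "set (drop (i - 1) p)"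
  have in1: "p ! t \<in> ?S" "p ! (t + 1) \<in> ?S" using nth_in_drop[OF d] a assms l by auto
  have ne: "p ! t \<noteq> p ! (t + 1)" using d assms l by (simp add: nth_eq_iff_index_eq)
  have "up (c i p) t = (Phi ?S (p ! t) < Phi ?S (p ! (t + 1)))"
    unfolding up_def using c_nth[OF d] assms l a by simp
  also have "\<dots> = (p ! (t + 1) < p ! t)" using Phi_anti_iff[OF _ in1] by simp
  also have "\<dots> = (\<not> up p t)" unfolding up_def using ne by auto
  finally show "up (c i p) t = (\<not> up p t)" .
qed

lemma Cidx_facts: assumes "i \<in> Cidx n" shows "odd i" "3 \<le> i" "i + 1 \<le> n"
  using assms unfolding Cidx_def by (auto split: if_splits)

lemma run_c: assumes "p \<in> PP n" "i \<in> Cidx n"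
  shows "run (c i p) + cnt (up p (i - 3)) (up p (i - 2)) (up p (i - 1))
       = run p + cnt (up p (i - 3)) (up (c i p) (i - 2)) (\<not> up p (i - 1))"
proof -
  have d: "distinct p" and l: "length p = n" using PP_facts[OF assms(1)] by auto
  have i: "3 \<le> i" "i + 1 \<le> n" using Cidx_facts[OF assms(2)] by auto
  have dc: "distinct (c i p)" using PP_facts[OF c_perm[OF assms(1)]] by simp
  have L: "card (Ch n (up (c i p))) + cnt (up p (i - 1 - 2)) (up p (i - 1 - 1)) (up p (i - 1))
       = card (Ch n (up p)) + cnt (up p (i - 1 - 2)) (up (c i p) (i - 1 - 1)) (\<not> up p (i - 1))"
    by (rule loc) (use i up_c[OF assms(1)] in auto)
  have e: "i - 1 - 2 = i - 3" "i - 1 - 1 = i - 2" by auto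
  show ?thesis using L unfolding e run_Ch[OF d] run_Ch[OF dc] l c_len by simp
qed


lemma cnt_diff: "cnt a b' (\<not> e) = Suc (cnt a b e) \<or> Suc (cnt a b' (\<not> e)) = cnt a b e"
  by (cases a; cases b; cases b'; cases e) (simp_all add: cnt_def)

definition Q :: "bool \<Rightarrow> bool \<Rightarrow> bool \<Rightarrow> bool \<Rightarrow> bool" where
  "Q a b b' e \<longleftrightarrow> cnt a b' (\<not> e) < cnt a b e"

lemma Q_neg: "Q (\<not> a) (\<not> b) (\<not> b') (\<not> e) = Q a b b' e"
  by (cases a; cases b; cases b'; cases e) (simp_all add: cnt_def Q_def)

lemma run_step: assumes "p \<in> PP n" "j \<in> Cidx n"
  shows "run (c j p) = Suc (run p) \<or> Suc (run (c j p)) = run p"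
  using run_c[OF assms] cnt_diff[of "up p (j - 3)" "up (c j p) (j - 2)" "up p (j - 1)" "up p (j - 2)"]
  by auto

lemma dec_iff: assumes "p \<in> PP n" "j \<in> Cidx n"
  shows "run (c j p) < run p \<longleftrightarrow> Q (up p (j - 3)) (up p (j - 2)) (up (c j p) (j - 2)) (up p (j - 1))"
  using run_c[OF assms] unfolding Q_def by auto

lemma R1: assumes "finite T" "z \<notin> T" "w \<in> T" shows "z < w \<longleftrightarrow> rk T z \<le> rk T w"
proof
  assume "z < w"
  then have "{t\<in>T. t < z} \<subseteq> {t\<in>T. t < w}" by auto
  then show "rk T z \<le> rk T w" unfolding rk_def using assms(1) by (simp add: card_mono)
next
  assume a: "rk T z \<le> rk T w"
  show "z < w"
  proof (rule ccontr)
    assume "\<not> z < w"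
    then have "w < z" using assms by (metis linorder_neqE_nat)
    then have "rk T w < rk T z" using rk_mono[OF assms(1,3)] by simp
    then show False using a by simp
  qed
qed

lemma RF: assumes "finite T" "z \<notin> T" "y \<in> T"
  shows "z < Phi T y \<longleftrightarrow> rk T z + rk T y < card T"
proof -
  have w: "Phi T y \<in> T" by (rule Phi_in[OF assms(1,3)])
  have "z < Phi T y \<longleftrightarrow> rk T z \<le> rk T (Phi T y)" by (rule R1[OF assms(1,2) w])
  also have "\<dots> \<longleftrightarrow> rk T z + rk T y < card T"
    unfolding rk_Phi[OF assms(1,3)] using rk_lt[OF assms(1,3)] by auto
  finally show ?thesis .
qed

lemma IM: assumes "finite S" "T \<subseteq> S" "w \<in> S"
  shows "rk (Phi S ` T) (Phi S w) = card {t\<in>T. w < t}"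
proof -
  have "{v \<in> Phi S ` T. v < Phi S w} = Phi S ` {t\<in>T. w < t}"
    using Phi_anti_iff[OF assms(1) _ assms(3)] assms(2) by auto
  moreover have "inj_on (Phi S) {t\<in>T. w < t}"
    by (rule inj_on_subset[OF Phi_inj[OF assms(1)]]) (use assms(2) in auto)
  ultimately show ?thesis unfolding rk_def by (simp add: card_image)
qed

lemma CNT: assumes "finite T"
  shows "card {t\<in>T. w < t} + rk T w + (if w \<in> T then 1 else 0) = card T"
proof -
  have e: "T = {t\<in>T. t < w} \<union> ({t\<in>T. w < t} \<union> (if w \<in> T then {w} else {}))"
    by (auto; metis linorder_neqE_nat)
  have "card T = card {t\<in>T. t < w} + card ({t\<in>T. w < t} \<union> (if w \<in> T then {w} else {}))"
    by (subst e, rule card_Un_disjoint) (use assms in auto)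
  also have "card ({t\<in>T. w < t} \<union> (if w \<in> T then {w} else {})) = card {t\<in>T. w < t} + (if w \<in> T then 1 else 0)"
    by (subst card_Un_disjoint) (use assms in auto)
  finally show ?thesis unfolding rk_def by simp
qed

lemma bprime: assumes "x \<in> PP n" "j \<in> Cidx n"
  shows "up (c j x) (j - 2) = (x ! (j - 2) < Phi (set (drop (j - 1) x)) (x ! (j - 1)))"
proof -
  have d: "distinct x" and l: "length x = n" using PP_facts[OF assms(1)] by auto
  have j: "3 \<le> j" "j + 1 \<le> n" using Cidx_facts[OF assms(2)] by auto
  have e: "j - 2 + 1 = j - 1" using j by simp
  have lt: "j - 2 < j - Suc 0" using j by simp
  have a1: "c j x ! (j - 2) = x ! (j - 2)" using c_nth[OF d, of j "j - 2"] j l lt by simp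
  have a2: "c j x ! (j - 1) = Phi (set (drop (j - 1) x)) (x ! (j - 1))"
    using c_nth[OF d, of j "j - 1"] j l by simp
  show ?thesis unfolding up_def e a1 a2 ..
qed

lemma set_drop_diff: assumes "distinct x" shows "set (drop k x) = set x - set (take k x)"
proof -
  have "distinct (take k x @ drop k x)" using assms by simp
  then have "set (take k x) \<inter> set (drop k x) = {}" by (simp only: distinct_append)
  moreover have "set x = set (take k x) \<union> set (drop k x)" by (metis append_take_drop_id set_append)
  ultimately show ?thesis by blast
qed

lemma drop_set_eq: assumes "distinct x" "distinct y" "set x = set y" "take k x = take k y"
  shows "set (drop k x) = set (drop k y)"
  using set_drop_diff[OF assms(1)] set_drop_diff[OF assms(2)] assms(3,4) by simp


lemma inv_dec: assumes p: "p \<in> PP n" and i: "i \<in> Cidx n" and j: "j \<in> Cidx n" and ij: "i \<noteq> j"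
  shows "run (c j (c i p)) < run (c i p) \<longleftrightarrow> run (c j p) < run p"
proof -
  let ?x = "c i p"
  have x: "?x \<in> PP n" by (rule c_perm[OF p])
  have d: "distinct p" and l: "length p = n" using PP_facts[OF p] by auto
  have dx: "distinct ?x" using PP_facts[OF x] by auto
  have if_: "odd i" "3 \<le> i" "i + 1 \<le> n" using Cidx_facts[OF i] by auto
  have jf: "odd j" "3 \<le> j" "j + 1 \<le> n" using Cidx_facts[OF j] by auto
  have bx: "up (c j ?x) (j - 2) = (?x ! (j - 2) < Phi (set (drop (j - 1) ?x)) (?x ! (j - 1)))"
    by (rule bprime[OF x j])
  have bp: "up (c j p) (j - 2) = (p ! (j - 2) < Phi (set (drop (j - 1) p)) (p ! (j - 1)))"
    by (rule bprime[OF p j])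
  show ?thesis
  proof (cases "j < i")
    case True
    then have ji: "j + 2 \<le> i" using if_(1) jf(1) by (auto elim!: oddE)
    have u: "up ?x t = up p t" if "t \<le> j - 1" for t
      using up_c(1)[OF p, of i t] that ji jf if_ by simp
    have n1: "?x ! (j - 2) = p ! (j - 2)" "?x ! (j - 1) = p ! (j - 1)"
    proof -
      have ar: "i - Suc 0 \<le> n" "j - 2 < n" "j - 2 < i - Suc 0" "j - Suc 0 < n" "j - Suc 0 < i - Suc 0"
        using ji jf if_ by auto
      show "?x ! (j - 2) = p ! (j - 2)" "?x ! (j - 1) = p ! (j - 1)"
        using c_nth[OF d, of i "j - 2"] c_nth[OF d, of i "j - 1"] ar l by simp_all
    qed
    have tk: "take (j - 1) ?x = take (j - 1) p"
      unfolding c_eq[OF d] using ji jf l by (simp add: min_def)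
    have st: "set ?x = set p" using PP_facts[OF x] PP_facts[OF p] by simp
    have sd: "set (drop (j - 1) ?x) = set (drop (j - 1) p)" by (rule drop_set_eq[OF dx d st tk])
    have "up (c j ?x) (j - 2) = up (c j p) (j - 2)" unfolding bx bp n1 sd ..
    then show ?thesis unfolding dec_iff[OF x j] dec_iff[OF p j] using u[of "j - 3"] u[of "j - 2"] u[of "j - 1"]
      by simp
  next
    case False
    then have "i < j" using ij by simp
    then have ji: "i + 2 \<le> j" using if_(1) jf(1) by (auto elim!: oddE)
    have u: "up ?x t = (\<not> up p t)" if "j - 3 \<le> t" "t \<le> j - 1" for t
      using up_c(2)[OF p, of i t] that ji jf if_ by simp
    let ?S = "set (drop (i - 1) p)" let ?T = "set (drop (j - 1) p)"
    have fS: "finite ?S" and fT: "finite ?T" by auto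
    have TS: "?T \<subseteq> ?S"
    proof -
      have "drop (j - 1) p = drop (j - 1 - (i - 1)) (drop (i - 1) p)" using ji by simp
      then show ?thesis by (metis set_drop_subset)
    qed
    have n1: "?x ! (j - 2) = Phi ?S (p ! (j - 2))" "?x ! (j - 1) = Phi ?S (p ! (j - 1))"
    proof -
      have ar: "i - Suc 0 \<le> n" "j - 2 < n" "\<not> j - 2 < i - Suc 0" "j - Suc 0 < n" "\<not> j - Suc 0 < i - Suc 0"
        using ji jf if_ by auto
      show "?x ! (j - 2) = Phi ?S (p ! (j - 2))" "?x ! (j - 1) = Phi ?S (p ! (j - 1))"
        using c_nth[OF d, of i "j - 2"] c_nth[OF d, of i "j - 1"] ar l by simp_all
    qed
    have dr: "drop (j - 1) ?x = map (Phi ?S) (drop (j - 1) p)"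
    proof -
      have "drop (j - 1) ?x = drop (j - 1 - (i - 1)) (map (Phi ?S) (drop (i - 1) p))"
        unfolding c_eq[OF d] using ji jf l by simp
      also have "\<dots> = map (Phi ?S) (drop (j - 1) p)"
        using ji by (simp add: drop_map)
      finally show ?thesis .
    qed
    have sd: "set (drop (j - 1) ?x) = Phi ?S ` ?T" unfolding dr by simp
    have zS: "p ! (j - 2) \<in> ?S" and zT: "p ! (j - 2) \<notin> ?T" and yT: "p ! (j - 1) \<in> ?T"
      using nth_in_drop[OF d] ji jf l by auto
    have yS: "p ! (j - 1) \<in> ?S" using yT TS by auto
    have inj: "inj_on (Phi ?S) ?S" by (rule Phi_inj[OF fS])
    have zT': "Phi ?S (p ! (j - 2)) \<notin> Phi ?S ` ?T"
      using inj zS zT TS by (metis inj_on_image_mem_iff)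
    have yT': "Phi ?S (p ! (j - 1)) \<in> Phi ?S ` ?T" using yT by simp
    have cT: "card (Phi ?S ` ?T) = card ?T" using inj TS by (metis card_image inj_on_subset)
    have "up (c j ?x) (j - 2) \<longleftrightarrow>
        rk (Phi ?S ` ?T) (Phi ?S (p ! (j - 2))) + rk (Phi ?S ` ?T) (Phi ?S (p ! (j - 1))) < card (Phi ?S ` ?T)"
      unfolding bx n1 sd by (rule RF[OF _ zT' yT']) simp
    also have "\<dots> \<longleftrightarrow> card {t\<in>?T. p ! (j - 2) < t} + card {t\<in>?T. p ! (j - 1) < t} < card ?T"
      unfolding IM[OF fS TS zS] IM[OF fS TS yS] cT ..
    finally have b1: "up (c j ?x) (j - 2) \<longleftrightarrow> card {t\<in>?T. p ! (j - 2) < t} + card {t\<in>?T. p ! (j - 1) < t} < card ?T" .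
    have b2: "up (c j p) (j - 2) \<longleftrightarrow> rk ?T (p ! (j - 2)) + rk ?T (p ! (j - 1)) < card ?T"
      unfolding bp by (rule RF[OF fT zT yT])
    have c1: "card {t\<in>?T. p ! (j - 2) < t} + rk ?T (p ! (j - 2)) = card ?T"
      using CNT[OF fT, of "p ! (j - 2)"] zT by simp
    have c2: "card {t\<in>?T. p ! (j - 1) < t} + rk ?T (p ! (j - 1)) + 1 = card ?T"
      using CNT[OF fT, of "p ! (j - 1)"] yT by simp
    have "up (c j ?x) (j - 2) = (\<not> up (c j p) (j - 2))" using b1 b2 c1 c2 by linarith
    then show ?thesis unfolding dec_iff[OF x j] dec_iff[OF p j]
      using u[of "j - 3"] u[of "j - 2"] u[of "j - 1"] jf Q_neg by simp
  qed
qed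


lemma pc: "[:1, 1:] = 1 + monom (1::int) 1"
  by (simp add: monom_altdef one_pCons)


definition DD :: "nat \<Rightarrow> nat list \<Rightarrow> nat set" where
  "DD n p = {i \<in> Cidx n. run (c i p) < run p}"

lemma finite_Cidx: "finite (Cidx n)"
  by (rule finite_subset[of _ "{..n}"]) (auto simp: Cidx_def)

lemma finite_DD: "finite (DD n p)"
  by (rule finite_subset[OF _ finite_Cidx]) (auto simp: DD_def)

lemma DD_c: assumes p: "p \<in> PP n" and i: "i \<in> Cidx n"
  shows "DD n (c i p) = (if i \<in> DD n p then DD n p - {i} else insert i (DD n p))"
proof -
  have d: "distinct p" using PP_facts[OF p] by simp
  have x: "c i p \<in> PP n" by (rule c_perm[OF p])
  have oth: "j \<in> DD n (c i p) \<longleftrightarrow> j \<in> DD n p" if "j \<in> Cidx n" "j \<noteq> i" for j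
    using inv_dec[OF p i that(1)] that unfolding DD_def by auto
  have self: "i \<in> DD n (c i p) \<longleftrightarrow> i \<notin> DD n p"
    using run_step[OF p i] i unfolding DD_def by (auto simp: c_c[OF d])
  show ?thesis
  proof (rule set_eqI)
    fix j
    show "j \<in> DD n (c i p) \<longleftrightarrow> j \<in> (if i \<in> DD n p then DD n p - {i} else insert i (DD n p))"
    proof (cases "j = i")
      case True then show ?thesis using self by auto
    next
      case False
      have "j \<in> DD n q \<Longrightarrow> j \<in> Cidx n" for q unfolding DD_def by simp
      then show ?thesis using oth[of j] False by auto
    qed
  qed
qed

lemma main_sum:
  assumes "finite T" "T \<subseteq> Cidx n"
  shows "R n = [:1, 1:] ^ card T * (\<Sum>p\<in>{p\<in>PP n. DD n p \<inter> T = {}}. monom 1 (run p))"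
  using assms
proof (induction T rule: finite_induct)
  case empty
  then show ?case unfolding R_def by simp
next
  case (insert i T)
  have i: "i \<in> Cidx n" and TC: "T \<subseteq> Cidx n" using insert.prems by auto
  let ?Z = "{p\<in>PP n. DD n p \<inter> T = {}}"
  let ?A = "{p\<in>PP n. DD n p \<inter> insert i T = {}}"
  let ?B = "{p\<in>PP n. DD n p \<inter> T = {} \<and> i \<in> DD n p}"
  let ?f = "\<lambda>p. monom (1::int) (run p)"
  have fin: "finite (PP n)" by (rule finite_permutations_of_set)
  have ins: "DD n p \<inter> insert i T = {} \<longleftrightarrow> i \<notin> DD n p \<and> DD n p \<inter> T = {}" for p
    by auto
  have U: "?Z = ?A \<union> ?B" unfolding ins by (rule set_eqI) (simp, blast)
  have Dj: "?A \<inter> ?B = {}" unfolding ins by (rule set_eqI) simp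
  have s1: "sum ?f ?Z = sum ?f ?A + sum ?f ?B"
    unfolding U by (rule sum.union_disjoint) (use fin Dj in auto)
  have key: "c i p \<in> PP n \<and> DD n (c i p) \<inter> T = DD n p \<inter> T" if "p \<in> PP n" for p
  proof -
    have "DD n (c i p) \<inter> T = DD n p \<inter> T" using DD_c[OF that i] insert.hyps(2) by auto
    then show ?thesis using c_perm[OF that] by simp
  qed
  have s2: "sum ?f ?B = sum (\<lambda>p. monom 1 1 * ?f p) ?A"
  proof (rule sum.reindex_bij_witness[of _ "c i" "c i"])
    fix a assume a: "a \<in> ?B"
    then have ap: "a \<in> PP n" by simp
    show "c i (c i a) = a" using c_c PP_facts[OF ap] by simp
    show "c i a \<in> ?A" using a key[OF ap] DD_c[OF ap i] by auto
    have "i \<in> DD n a" using a by auto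
    then have "run a = Suc (run (c i a))" using run_step[OF ap i] i unfolding DD_def by auto
    then show "monom 1 1 * ?f (c i a) = ?f a" by (simp add: mult_monom)
  next
    fix b assume b: "b \<in> ?A"
    then have bp: "b \<in> PP n" by simp
    show "c i (c i b) = b" using c_c PP_facts[OF bp] by simp
    show "c i b \<in> ?B" using b key[OF bp] DD_c[OF bp i] by auto
  qed
  have sZ: "sum ?f ?Z = [:1, 1:] * sum ?f ?A"
    unfolding s1 s2 pc sum_distrib_left[symmetric] by (simp add: distrib_right)
  have cc: "card (insert i T) = Suc (card T)" using insert.hyps by simp
  have "R n = [:1, 1:] ^ card T * ([:1, 1:] * sum ?f ?A)" unfolding sZ[symmetric] by (rule insert.IH[OF TC])
  then show ?case unfolding cc power_Suc2 mult.assoc .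
qed


lemma card_Cidx: assumes "n \<ge> 4" shows "card (Cidx n) = (n - 2) div 2"
proof -
  let ?m = "(n - 2) div 2"
  have "Cidx n = (\<lambda>j. 2 * j + 1) ` {1..?m}"
  proof (rule set_eqI)
    fix i
    show "i \<in> Cidx n \<longleftrightarrow> i \<in> (\<lambda>j. 2 * j + 1) ` {1..?m}"
    proof
      assume "i \<in> Cidx n"
      then have h: "odd i" "3 \<le> i" "i \<le> (if even n then n - 1 else n - 2)" unfolding Cidx_def by auto
      then obtain j where j: "i = 2 * j + 1" by (auto elim!: oddE)
      have "1 \<le> j" "j \<le> ?m" using h j assms by (auto split: if_splits elim!: evenE oddE)
      then show "i \<in> (\<lambda>j. 2 * j + 1) ` {1..?m}" using j by auto
    next
      assume "i \<in> (\<lambda>j. 2 * j + 1) ` {1..?m}"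
      then obtain j where j: "i = 2 * j + 1" "1 \<le> j" "j \<le> ?m" by auto
      then show "i \<in> Cidx n" unfolding Cidx_def mem_Collect_eq using assms by presburger
    qed
  qed
  moreover have "inj_on (\<lambda>j. 2 * j + 1) {1..?m}" by (rule inj_onI) simp
  ultimately show ?thesis by (simp add: card_image)
qed

lemma orbit_PP: assumes "q \<in> orbit n p" "p \<in> PP n" shows "q \<in> PP n"
  using assms
proof (induction rule: orbit.induct)
  case self then show ?case .
next
  case (step q i) then show ?case using c_perm by blast
qed

lemma orbit_inv: assumes "q \<in> orbit n p" "p \<in> PP n"
  shows "run q + card (DD n p) = run p + card (DD n q)"
  using assms
proof (induction rule: orbit.induct)
  case self
  then show ?case by simp
next
  case (step q i)
  have q: "q \<in> PP n" by (rule orbit_PP[OF step.hyps(1) step.prems])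
  have IH: "run q + card (DD n p) = run p + card (DD n q)" using step.IH step.prems by simp
  show ?case
  proof (cases "i \<in> DD n q")
    case True
    then have r: "Suc (run (c i q)) = run q" using run_step[OF q step.hyps(2)] unfolding DD_def by auto
    have "DD n (c i q) = DD n q - {i}" using DD_c[OF q step.hyps(2)] True by simp
    moreover have "card (DD n q) > 0" using True finite_DD[of n q] by (auto simp: card_gt_0_iff)
    ultimately have "Suc (card (DD n (c i q))) = card (DD n q)"
      using True finite_DD[of n q] by simp
    then show ?thesis using r IH by linarith
  next
    case False
    then have r: "run (c i q) = Suc (run q)" using run_step[OF q step.hyps(2)] step.hyps(2)
      unfolding DD_def by auto
    have "DD n (c i q) = insert i (DD n q)" using DD_c[OF q step.hyps(2)] False by simp
    then have "card (DD n (c i q)) = Suc (card (DD n q))"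
      using False finite_DD[of n q] by simp
    then show ?thesis using r IH by linarith
  qed
qed

lemma minimal_iff: assumes "p \<in> PP n" shows "minimal_in_orbit n p \<longleftrightarrow> DD n p = {}"
proof
  assume m: "minimal_in_orbit n p"
  show "DD n p = {}"
  proof (rule ccontr)
    assume "DD n p \<noteq> {}"
    then obtain i where i: "i \<in> DD n p" by auto
    then have "i \<in> Cidx n" "run (c i p) < run p" unfolding DD_def by auto
    moreover have "c i p \<in> orbit n p" using orbit.step[OF orbit.self] \<open>i \<in> Cidx n\<close> by blast
    ultimately show False using m unfolding minimal_in_orbit_def by fastforce
  qed
next
  assume "DD n p = {}"
  then show "minimal_in_orbit n p" unfolding minimal_in_orbit_def
    using orbit_inv[OF _ assms] by fastforce
qed

theorem mainTheorem4:
  fixes n m :: nat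
  assumes "n \<ge> 4" and "m = (n - 2) div 2"
  shows "R n = [:1, 1:] ^ m *
           (\<Sum>q\<in>{q\<in>permutations_of_set {1..n}. minimal_in_orbit n q}. monom 1 (run q))
         \<and> [:1, 1:] ^ m dvd R n"
proof -
  have e: "{q\<in>permutations_of_set {1..n}. minimal_in_orbit n q} = {p\<in>PP n. DD n p \<inter> Cidx n = {}}"
  proof -
    have "DD n p \<inter> Cidx n = DD n p" for p unfolding DD_def by auto
    then show ?thesis using minimal_iff by auto
  qed
  have "R n = [:1, 1:] ^ m *
           (\<Sum>q\<in>{q\<in>permutations_of_set {1..n}. minimal_in_orbit n q}. monom 1 (run q))"
    unfolding e using main_sum[OF finite_Cidx order_refl, of n] card_Cidx[OF assms(1)] assms(2) by simp
  then show ?thesis by (metis dvd_triv_left)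
qed

end
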